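(* Let $M$ be a nonsingular real symmetric $n \times n$ matrix and let $\alpha \subseteq \{1,\dots,n\}$ with $|\alpha| \geq 2$ such that every subset $\gamma \subseteq \alpha$ with $|\gamma|=2$ is a P-set of $M$. Then $\alpha$ is a P-set of $M$.
   Context: All matrices are real. For an $n\times n$ matrix $A$ and $\alpha \subseteq \{1,\dots,n\}$, $A(\alpha)$ denotes the principal submatrix obtained by deleting the rows and columns indexed by $\alpha$, and $\nu(A)$ denotes the nullity of $A$. A set $\alpha$ is a P-set of $A$ if $\nu(A(\alpha)) = \nu(A) + |\alpha|$. *)

theory Defs
  imports "Jordan_Normal_Form.Matrix_Kernel" "Jordan_Normal_Form.DL_Submatrix"
begin

text \<open>Indices are 0-based: an n x n matrix has indices {0..<n}.\<close>

definition nullity :: "real mat \<Rightarrow> nat" where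
  "nullity A = kernel_dim A"

definition principal_del :: "real mat \<Rightarrow> nat set \<Rightarrow> real mat" where
  "principal_del A \<alpha> = submatrix A ({0..<dim_row A} - \<alpha>) ({0..<dim_row A} - \<alpha>)"

definition is_P_set :: "real mat \<Rightarrow> nat set \<Rightarrow> bool" where
  "is_P_set A \<alpha> \<longleftrightarrow> nullity (principal_del A \<alpha>) = nullity A + card \<alpha>"

end

theory Submission
  imports Defs
begin

lemma kernel_dim_iso:
  fixes A C :: "'a::field mat"
  assumes A: "A \<in> carrier_mat nr nc" and C: "C \<in> carrier_mat mr mc"
  and P: "P \<in> carrier_mat mc nc" and Q: "Q \<in> carrier_mat nc mc"
  and PK: "\<And>v. v \<in> mat_kernel A \<Longrightarrow> P *\<^sub>v v \<in> mat_kernel C"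
  and QK: "\<And>w. w \<in> mat_kernel C \<Longrightarrow> Q *\<^sub>v w \<in> mat_kernel A"
  and QP: "\<And>v. v \<in> mat_kernel A \<Longrightarrow> Q *\<^sub>v (P *\<^sub>v v) = v"
  and PQ: "\<And>w. w \<in> mat_kernel C \<Longrightarrow> P *\<^sub>v (Q *\<^sub>v w) = w"
  shows "kernel_dim A = kernel_dim C"
proof -
  interpret KA: kernel nr nc A by unfold_locales (rule A)
  interpret KC: kernel mr mc C by unfold_locales (rule C)
  have hom: "(\<lambda>v. P *\<^sub>v v) \<in> LinearCombinations.module_hom class_ring KA.VK KC.VK"
    unfolding LinearCombinations.module_hom_def using PK mat_kernel_carrier[OF A] P
    apply (auto simp: mult_mat_vec)
    apply (rule mult_add_distrib_mat_vec[OF P]) by auto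
  interpret L: linear_map class_ring KA.VK KC.VK "\<lambda>v. P *\<^sub>v v"
    by (unfold_locales) (rule hom)
  obtain B where "finite B" "KA.basis B" using kernel_basis_exists[OF A] by auto
  hence fd: "KA.Ker.fin_dim" unfolding KA.Ker.fin_dim_def KA.Ker.basis_def by auto
  have inj: "inj_on (\<lambda>v. P *\<^sub>v v) (mat_kernel A)"
    by (metis QP inj_onI)
  have surj: "(\<lambda>v. P *\<^sub>v v) ` (mat_kernel A) = mat_kernel C"
    using PK QK PQ by (auto) (metis image_eqI)
  have "KA.dim = KC.dim" using L.dim_eq[OF fd] inj surj by simp
  thus ?thesis using KA.kernel_dim KC.kernel_dim by simp
qed
lemma bij_pick: "finite S \<Longrightarrow> bij_betw (pick S) {..<card S} S"
proof -
  assume f: "finite S"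
  show ?thesis
  proof (rule bij_betwI'[where f="pick S"])
    fix x y assume "x \<in> {..<card S}" "y \<in> {..<card S}"
    thus "(pick S x = pick S y) = (x = y)"
      by (metis lessThan_iff nat_neq_iff pick_mono_le)
  next
    fix x assume "x \<in> {..<card S}" thus "pick S x \<in> S" by (simp add: pick_in_set_le)
  next
    fix y assume y: "y \<in> S"
    have "{a\<in>S. a < y} \<subset> S" using y by auto
    hence "card {a\<in>S. a < y} < card S" using f by (simp add: psubset_card_mono)
    thus "\<exists>x\<in>{..<card S}. y = pick S x" using pick_card_in_set[OF y] by force
  qed
qed

lemma coll_sub: "S \<subseteq> {0..<n} \<Longrightarrow> {i. i<n \<and> i\<in>S} = S" by auto

lemma submatrix_carrier:
  assumes "X \<in> carrier_mat n n" "I \<subseteq> {0..<n}" "J \<subseteq> {0..<n}"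
  shows "submatrix X I J \<in> carrier_mat (card I) (card J)"
proof -
  have d: "dim_row X = n" "dim_col X = n" using assms(1) by auto
  have "dim_row (submatrix X I J) = card {i. i<dim_row X \<and> i\<in>I}" by (rule dim_submatrix)
  also have "\<dots> = card I" unfolding d coll_sub[OF assms(2)] ..
  finally have 1: "dim_row (submatrix X I J) = card I" .
  have "dim_col (submatrix X I J) = card {i. i<dim_col X \<and> i\<in>J}" by (rule dim_submatrix)
  also have "\<dots> = card J" unfolding d coll_sub[OF assms(3)] ..
  finally have 2: "dim_col (submatrix X I J) = card J" .
  show ?thesis using 1 2 by (intro carrier_matI)
qed

lemma submatrix_idx:
  assumes "X \<in> carrier_mat n n" "I \<subseteq> {0..<n}" "J \<subseteq> {0..<n}" "i < card I" "j < card J"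
  shows "submatrix X I J $$ (i,j) = X $$ (pick I i, pick J j)"
proof -
  have d: "dim_row X = n" "dim_col X = n" using assms(1) by auto
  show ?thesis
    by (rule submatrix_index) (unfold d coll_sub[OF assms(2)] coll_sub[OF assms(3)], fact+)
qed

lemma sum_pick:
  assumes "finite S"
  shows "(\<Sum>t\<in>{0..<card S}. f (pick S t)) = (\<Sum>k\<in>S. f k)"
  using sum.reindex_bij_betw[OF bij_pick[OF assms], of f] by (simp add: atLeast0LessThan)

lemma submatrix_mult_split:
  fixes X Y :: "'a::comm_ring_1 mat"
  assumes X: "X \<in> carrier_mat n n" and Y: "Y \<in> carrier_mat n n"
    and I: "I \<subseteq> {0..<n}" and J: "J \<subseteq> {0..<n}" and S: "S \<subseteq> {0..<n}"
  shows "submatrix (X*Y) I J = submatrix X I S * submatrix Y S J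
     + submatrix X I ({0..<n}-S) * submatrix Y ({0..<n}-S) J"
proof -
  let ?T = "{0..<n}-S"
  have T: "?T \<subseteq> {0..<n}" by auto
  have XY: "X*Y \<in> carrier_mat n n" using X Y by auto
  note c1 = submatrix_carrier[OF X I S] submatrix_carrier[OF Y S J]
    submatrix_carrier[OF X I T] submatrix_carrier[OF Y T J] submatrix_carrier[OF XY I J]
  show ?thesis
  proof (rule eq_matI)
    fix i j assume "i < dim_row (submatrix X I S * submatrix Y S J
     + submatrix X I ?T * submatrix Y ?T J)" "j < dim_col (submatrix X I S * submatrix Y S J
     + submatrix X I ?T * submatrix Y ?T J)"
    hence i: "i < card I" and j: "j < card J" using c1 by auto
    have pi: "pick I i < n" using pick_in_set_le[OF i] I by auto
    have pj: "pick J j < n" using pick_in_set_le[OF j] J by auto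
    have fS: "finite S" using S finite_subset by blast
    have fT: "finite ?T" by auto
    have "(submatrix X I S * submatrix Y S J + submatrix X I ?T * submatrix Y ?T J) $$ (i,j)
      = (\<Sum>t\<in>{0..<card S}. X $$ (pick I i, pick S t) * Y $$ (pick S t, pick J j))
      + (\<Sum>t\<in>{0..<card ?T}. X $$ (pick I i, pick ?T t) * Y $$ (pick ?T t, pick J j))"
      using c1 i j
      by (simp add: scalar_prod_def submatrix_idx[OF X I S] submatrix_idx[OF Y S J]
          submatrix_idx[OF X I T] submatrix_idx[OF Y T J])
    also have "\<dots> = (\<Sum>k\<in>S. X $$ (pick I i, k) * Y $$ (k, pick J j))
      + (\<Sum>k\<in>?T. X $$ (pick I i, k) * Y $$ (k, pick J j))"
      using sum_pick[OF fS, of "\<lambda>k. X $$ (pick I i, k) * Y $$ (k, pick J j)"]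
        sum_pick[OF fT, of "\<lambda>k. X $$ (pick I i, k) * Y $$ (k, pick J j)"] by simp
    also have "\<dots> = (\<Sum>k\<in>{0..<n}. X $$ (pick I i, k) * Y $$ (k, pick J j))"
      using sum.subset_diff[OF S, of "\<lambda>k. X $$ (pick I i, k) * Y $$ (k, pick J j)"] by (simp add: add.commute)
    also have "\<dots> = submatrix (X*Y) I J $$ (i,j)"
      using X Y pi pj submatrix_idx[OF XY I J i j]
      by (simp add: scalar_prod_def)
    finally show "submatrix (X*Y) I J $$ (i,j) = (submatrix X I S * submatrix Y S J
     + submatrix X I ?T * submatrix Y ?T J) $$ (i,j)" by simp
  qed (use c1 in auto)
qed

lemma kernel_dim_full:
  fixes X :: "'a::field mat"
  assumes X: "X \<in> carrier_mat nr nc"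
  shows "kernel_dim X = nc \<longleftrightarrow> X = 0\<^sub>m nr nc"
proof -
  obtain C where gj: "gauss_jordan_single X = C" by auto
  note g = gauss_jordan_single[OF X gj]
  obtain P Q where PQ: "C = P * X" "P \<in> carrier_mat nr nr" "Q \<in> carrier_mat nr nr"
    "P * Q = 1\<^sub>m nr" "Q * P = 1\<^sub>m nr" using g(4) by auto
  have kd: "kernel_dim X = nc - card {i. i < nr \<and> row C i \<noteq> 0\<^sub>v nc}"
    using kernel_dim_code[of X] find_base_vectors(5)[OF g(3) g(2)] X gj by simp
  show ?thesis
  proof
    assume "X = 0\<^sub>m nr nc"
    hence "C = 0\<^sub>m nr nc" using PQ by simp
    hence "{i. i < nr \<and> row C i \<noteq> 0\<^sub>v nc} = {}" by auto
    thus "kernel_dim X = nc" using kd by (simp only: card.empty)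
  next
    assume k: "kernel_dim X = nc"
    show "X = 0\<^sub>m nr nc"
    proof (cases "nc = 0")
      case True thus ?thesis using X by (intro eq_matI) auto
    next
      case False
      have "nc - card {i. i < nr \<and> row C i \<noteq> 0\<^sub>v nc} = nc" using kd k by simp
      hence "card {i. i < nr \<and> row C i \<noteq> 0\<^sub>v nc} = 0" using False by linarith
      moreover have "finite {i. i < nr \<and> row C i \<noteq> 0\<^sub>v nc}" by simp
      ultimately have e: "{i. i < nr \<and> row C i \<noteq> 0\<^sub>v nc} = {}" by (meson card_0_eq)
      have C0: "C = 0\<^sub>m nr nc"
      proof (rule eq_matI)
        fix i j assume ij: "i < dim_row (0\<^sub>m nr nc)" "j < dim_col (0\<^sub>m nr nc)"
        hence "row C i = 0\<^sub>v nc" using e by auto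
        hence "row C i $ j = 0" using ij by simp
        thus "C $$ (i,j) = 0\<^sub>m nr nc $$ (i,j)" using ij g(2) by auto
      qed (use g(2) in auto)
      have "X = (Q * P) * X" using PQ X by simp
      also have "\<dots> = Q * C" using PQ(1-3) X by (simp add: assoc_mult_mat[of Q nr nr P nr X nc])
      also have "\<dots> = 0\<^sub>m nr nc" using C0 PQ by simp
      finally show ?thesis .
    qed
  qed
qed

lemma zero_mult_vec[simp]: "v \<in> carrier_vec m \<Longrightarrow> 0\<^sub>m k m *\<^sub>v v = (0\<^sub>v k :: 'a::comm_ring_1 vec)"
  by (intro eq_vecI) (auto simp: scalar_prod_def)

lemma blk:
  fixes X :: "'a::comm_ring_1 mat"
  assumes "X \<in> carrier_mat a b" "Y \<in> carrier_mat b c" "Z \<in> carrier_mat a d"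
    "W \<in> carrier_mat d c" "v \<in> carrier_vec c" "W *\<^sub>v v = 0\<^sub>v d"
  shows "(X*Y + Z*W) *\<^sub>v v = X *\<^sub>v (Y *\<^sub>v v)"
proof -
  have "(X*Y + Z*W) *\<^sub>v v = (X*Y) *\<^sub>v v + (Z*W) *\<^sub>v v"
    using assms by (intro add_mult_distrib_mat_vec) auto
  also have "\<dots> = X *\<^sub>v (Y *\<^sub>v v) + Z *\<^sub>v (W *\<^sub>v v)"
    using assms by (simp add: assoc_mult_mat_vec)
  also have "Z *\<^sub>v (W *\<^sub>v v) = 0\<^sub>v a" using assms(3,6)
    by (intro eq_vecI) (auto simp: scalar_prod_def)
  also have "X *\<^sub>v (Y *\<^sub>v v) + 0\<^sub>v a = X *\<^sub>v (Y *\<^sub>v v)" by (rule right_zero_vec) (use assms in auto)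
  finally show ?thesis .
qed

lemma sub_one_same:
  assumes "I \<subseteq> {0..<n}"
  shows "submatrix (1\<^sub>m n) I I = 1\<^sub>m (card I)"
proof -
  have c: "(1\<^sub>m n :: 'a::{zero,one} mat) \<in> carrier_mat n n" by simp
  note cI = submatrix_carrier[OF c assms assms]
  show ?thesis
  proof (rule eq_matI)
    fix i j assume ij: "i < dim_row (1\<^sub>m (card I) :: 'a mat)" "j < dim_col (1\<^sub>m (card I) :: 'a mat)"
    hence "i < card I" "j < card I" by auto
    moreover have "pick I i < n" "pick I j < n" using pick_in_set_le[OF \<open>i < card I\<close>]
        pick_in_set_le[OF \<open>j < card I\<close>] assms by auto
    moreover have "pick I i = pick I j \<longleftrightarrow> i = j"
      using \<open>i < card I\<close> \<open>j < card I\<close> by (metis nat_neq_iff pick_mono_le)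
    ultimately show "submatrix (1\<^sub>m n) I I $$ (i, j) = (1\<^sub>m (card I) :: 'a mat) $$ (i, j)"
      using submatrix_idx[OF c assms assms] by simp
  qed (use cI in auto)
qed

lemma sub_one_disj:
  assumes "I \<subseteq> {0..<n}" "J \<subseteq> {0..<n}" "I \<inter> J = {}"
  shows "submatrix (1\<^sub>m n) I J = 0\<^sub>m (card I) (card J)"
proof -
  have c: "(1\<^sub>m n :: 'a::{zero,one} mat) \<in> carrier_mat n n" by simp
  note cI = submatrix_carrier[OF c assms(1,2)]
  show ?thesis
  proof (rule eq_matI)
    fix i j assume ij: "i < dim_row (0\<^sub>m (card I) (card J) :: 'a mat)" "j < dim_col (0\<^sub>m (card I) (card J) :: 'a mat)"
    hence "i < card I" "j < card J" by auto
    moreover have "pick I i < n" "pick J j < n" "pick I i \<noteq> pick J j" using pick_in_set_le[OF \<open>i < card I\<close>]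
        pick_in_set_le[OF \<open>j < card J\<close>] assms by auto
    ultimately show "submatrix (1\<^sub>m n) I J $$ (i, j) = (0\<^sub>m (card I) (card J) :: 'a mat) $$ (i, j)"
      using submatrix_idx[OF c assms(1,2)] by simp
  qed (use cI in auto)
qed

lemma principal_iso:
  fixes M B :: "'a::field mat"
  assumes M: "M \<in> carrier_mat n n" and B: "B \<in> carrier_mat n n"
    and MB: "M * B = 1\<^sub>m n" and BM: "B * M = 1\<^sub>m n" and a: "\<alpha> \<subseteq> {0..<n}"
  shows "kernel_dim (submatrix M ({0..<n}-\<alpha>) ({0..<n}-\<alpha>)) = kernel_dim (submatrix B \<alpha> \<alpha>)"
proof -
  define \<beta> where "\<beta> = {0..<n}-\<alpha>"
  have b: "\<beta> \<subseteq> {0..<n}" unfolding \<beta>_def by auto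
  have ab: "\<alpha> \<inter> \<beta> = {}" "\<beta> \<inter> \<alpha> = {}" unfolding \<beta>_def by auto
  define k where "k = card \<alpha>"
  define m where "m = card \<beta>"
  note Mbb = submatrix_carrier[OF M b b, folded m_def]
  note Mab = submatrix_carrier[OF M a b, folded m_def k_def]
  note Mba = submatrix_carrier[OF M b a, folded m_def k_def]
  note Maa = submatrix_carrier[OF M a a, folded k_def]
  note Bbb = submatrix_carrier[OF B b b, folded m_def]
  note Bab = submatrix_carrier[OF B a b, folded m_def k_def]
  note Bba = submatrix_carrier[OF B b a, folded m_def k_def]
  note Baa = submatrix_carrier[OF B a a, folded k_def]
  have e1: "submatrix B \<alpha> \<alpha> * submatrix M \<alpha> \<beta> + submatrix B \<alpha> \<beta> * submatrix M \<beta> \<beta> = 0\<^sub>m k m"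
    using submatrix_mult_split[OF B M a b a] BM sub_one_disj[OF a b ab(1)]
    unfolding \<beta>_def k_def m_def by metis
  have e2: "submatrix B \<beta> \<alpha> * submatrix M \<alpha> \<beta> + submatrix B \<beta> \<beta> * submatrix M \<beta> \<beta> = 1\<^sub>m m"
    using submatrix_mult_split[OF B M b b a] BM sub_one_same[OF b]
    unfolding \<beta>_def k_def m_def by metis
  have e3: "submatrix M \<beta> \<beta> * submatrix B \<beta> \<alpha> + submatrix M \<beta> \<alpha> * submatrix B \<alpha> \<alpha> = 0\<^sub>m m k"
    using submatrix_mult_split[OF M B b a b] MB sub_one_disj[OF b a ab(2)]
    unfolding \<beta>_def k_def m_def using Diff_Diff_Int[of "{0..<n}" \<alpha>] Int_absorb1[OF a] by (metis Int_commute)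
  have e4: "submatrix M \<alpha> \<beta> * submatrix B \<beta> \<alpha> + submatrix M \<alpha> \<alpha> * submatrix B \<alpha> \<alpha> = 1\<^sub>m k"
    using submatrix_mult_split[OF M B a a b] MB sub_one_same[OF a]
    unfolding \<beta>_def k_def m_def using Diff_Diff_Int[of "{0..<n}" \<alpha>] Int_absorb1[OF a] by (metis Int_commute)
  show ?thesis unfolding \<beta>_def[symmetric]
  proof (rule kernel_dim_iso[OF Mbb Baa Mab Bba])
    fix v assume v: "v \<in> mat_kernel (submatrix M \<beta> \<beta>)"
    note vv = mat_kernelD[OF Mbb v]
    have "(submatrix B \<alpha> \<alpha> * submatrix M \<alpha> \<beta> + submatrix B \<alpha> \<beta> * submatrix M \<beta> \<beta>) *\<^sub>v v
      = submatrix B \<alpha> \<alpha> *\<^sub>v (submatrix M \<alpha> \<beta> *\<^sub>v v)"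
      by (rule blk[OF Baa Mab Bab Mbb vv])
    hence "submatrix B \<alpha> \<alpha> *\<^sub>v (submatrix M \<alpha> \<beta> *\<^sub>v v) = 0\<^sub>v k" using e1 vv by simp
    thus "submatrix M \<alpha> \<beta> *\<^sub>v v \<in> mat_kernel (submatrix B \<alpha> \<alpha>)"
      using Mab vv by (intro mat_kernelI[OF Baa]) auto
    have "(submatrix B \<beta> \<alpha> * submatrix M \<alpha> \<beta> + submatrix B \<beta> \<beta> * submatrix M \<beta> \<beta>) *\<^sub>v v
      = submatrix B \<beta> \<alpha> *\<^sub>v (submatrix M \<alpha> \<beta> *\<^sub>v v)"
      by (rule blk[OF Bba Mab Bbb Mbb vv])
    thus "submatrix B \<beta> \<alpha> *\<^sub>v (submatrix M \<alpha> \<beta> *\<^sub>v v) = v" using e2 vv by simp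
  next
    fix w assume w: "w \<in> mat_kernel (submatrix B \<alpha> \<alpha>)"
    note ww = mat_kernelD[OF Baa w]
    have "(submatrix M \<beta> \<beta> * submatrix B \<beta> \<alpha> + submatrix M \<beta> \<alpha> * submatrix B \<alpha> \<alpha>) *\<^sub>v w
      = submatrix M \<beta> \<beta> *\<^sub>v (submatrix B \<beta> \<alpha> *\<^sub>v w)"
      by (rule blk[OF Mbb Bba Mba Baa ww])
    hence "submatrix M \<beta> \<beta> *\<^sub>v (submatrix B \<beta> \<alpha> *\<^sub>v w) = 0\<^sub>v m" using e3 ww by simp
    thus "submatrix B \<beta> \<alpha> *\<^sub>v w \<in> mat_kernel (submatrix M \<beta> \<beta>)"
      using Bba ww by (intro mat_kernelI[OF Mbb]) auto
    have "(submatrix M \<alpha> \<beta> * submatrix B \<beta> \<alpha> + submatrix M \<alpha> \<alpha> * submatrix B \<alpha> \<alpha>) *\<^sub>v w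
      = submatrix M \<alpha> \<beta> *\<^sub>v (submatrix B \<beta> \<alpha> *\<^sub>v w)"
      by (rule blk[OF Mab Bba Maa Baa ww])
    thus "submatrix M \<alpha> \<beta> *\<^sub>v (submatrix B \<beta> \<alpha> *\<^sub>v w) = w" using e4 ww by simp
  qed
qed

lemma sub_zero_entries:
  assumes B: "B \<in> carrier_mat n n" and g: "\<gamma> \<subseteq> {0..<n}"
    and z: "submatrix B \<gamma> \<gamma> = 0\<^sub>m (card \<gamma>) (card \<gamma>)"
    and i: "i \<in> \<gamma>" and j: "j \<in> \<gamma>"
  shows "B $$ (i,j) = (0::'a::zero)"
proof -
  have f: "finite \<gamma>" using g finite_subset by blast
  obtain t where t: "t < card \<gamma>" "i = pick \<gamma> t" using bij_betw_imp_surj_on[OF bij_pick[OF f]] i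
    by (metis imageE lessThan_iff)
  obtain s where s: "s < card \<gamma>" "j = pick \<gamma> s" using bij_betw_imp_surj_on[OF bij_pick[OF f]] j
    by (metis imageE lessThan_iff)
  have "B $$ (i,j) = submatrix B \<gamma> \<gamma> $$ (t,s)" using submatrix_idx[OF B g g t(1) s(1)] t s by simp
  thus ?thesis using z t s by simp
qed

theorem theorem2p4:
  fixes M :: "real mat" and n :: nat and \<alpha> :: "nat set"
  assumes "M \<in> carrier_mat n n"
    and "transpose_mat M = M"
    and "det M \<noteq> 0"
    and "\<alpha> \<subseteq> {0..<n}"
    and "card \<alpha> \<ge> 2"
    and "\<forall>\<gamma>. \<gamma> \<subseteq> \<alpha> \<and> card \<gamma> = 2 \<longrightarrow> is_P_set M \<gamma>"
  shows "is_P_set M \<alpha>"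
proof -
  note M = assms(1) and a = assms(4)
  from det_non_zero_imp_unit[OF M assms(3), unfolded Units_def, of "()"]
  obtain B where B: "B \<in> carrier_mat n n" and BM: "B * M = 1\<^sub>m n" and MB: "M * B = 1\<^sub>m n"
    by (auto simp: ring_mat_def)
  have kid: "mat_kernel (B * M) = mat_kernel M" by (rule mat_kernel_mult_eq[OF M B M MB])
  have id2: "mat_kernel M = mat_kernel (1\<^sub>m n)" using kid[unfolded BM] by (rule sym)
  have dc: "dim_col M = n" using M by simp
  have "kernel_dim M = kernel.dim n M" unfolding kernel_dim_def dc ..
  also have "\<dots> = kernel.dim n (1\<^sub>m n :: real mat)" unfolding id2 ..
  also have "\<dots> = 0" by (rule kernel_one_mat(1))
  finally have n0: "nullity M = 0" unfolding nullity_def .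
  have pd: "\<And>\<gamma>. principal_del M \<gamma> = submatrix M ({0..<n}-\<gamma>) ({0..<n}-\<gamma>)"
    unfolding principal_del_def using M by simp
  have fa: "finite \<alpha>" using a finite_subset by blast
  have zero: "B $$ (i,j) = 0" if i: "i \<in> \<alpha>" and j: "j \<in> \<alpha>" for i j
  proof -
    obtain \<gamma> where g: "\<gamma> \<subseteq> \<alpha>" "card \<gamma> = 2" "i \<in> \<gamma>" "j \<in> \<gamma>"
    proof (cases "i = j")
      case False thus ?thesis using that[of "{i,j}"] i j by auto
    next
      case True
      have "\<alpha> - {i} \<noteq> {}"
      proof
        assume "\<alpha> - {i} = {}"
        hence "\<alpha> \<subseteq> {i}" by auto
        hence "card \<alpha> \<le> card {i}" by (intro card_mono) auto
        thus False using assms(5) by simp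
      qed
      then obtain l where "l \<in> \<alpha>" "l \<noteq> i" by auto
      thus ?thesis using that[of "{i,l}"] i True by auto
    qed
    have ga: "\<gamma> \<subseteq> {0..<n}" using g a by auto
    have "is_P_set M \<gamma>" using assms(6) g by auto
    hence "kernel_dim (submatrix B \<gamma> \<gamma>) = card \<gamma>"
      unfolding is_P_set_def nullity_def n0[unfolded nullity_def] pd
        principal_iso[OF M B MB BM ga] by simp
    hence "submatrix B \<gamma> \<gamma> = 0\<^sub>m (card \<gamma>) (card \<gamma>)"
      using kernel_dim_full[OF submatrix_carrier[OF B ga ga]] by simp
    thus ?thesis using sub_zero_entries[OF B ga _ g(3,4)] by simp
  qed
  have "submatrix B \<alpha> \<alpha> = 0\<^sub>m (card \<alpha>) (card \<alpha>)"
  proof (rule eq_matI)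
    fix i j assume "i < dim_row (0\<^sub>m (card \<alpha>) (card \<alpha>) :: real mat)" "j < dim_col (0\<^sub>m (card \<alpha>) (card \<alpha>) :: real mat)"
    hence ij: "i < card \<alpha>" "j < card \<alpha>" by auto
    show "submatrix B \<alpha> \<alpha> $$ (i, j) = 0\<^sub>m (card \<alpha>) (card \<alpha>) $$ (i, j)"
      using submatrix_idx[OF B a a ij] zero[OF pick_in_set_le[OF ij(1)] pick_in_set_le[OF ij(2)]] ij by simp
  qed (use submatrix_carrier[OF B a a] in auto)
  hence "kernel_dim (submatrix B \<alpha> \<alpha>) = card \<alpha>"
    using kernel_dim_full[OF submatrix_carrier[OF B a a]] by simp
  thus ?thesis unfolding is_P_set_def nullity_def n0[unfolded nullity_def] pd
        principal_iso[OF M B MB BM a] by simp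
qed

end
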